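(* For $\delta\in[0,1]$ and every integer $n\ge 2$: (a) $\varepsilon_{1\times n}(\delta)=\delta$ if $\delta\in[0,\tfrac12)$, and $\varepsilon_{1\times n}(\delta)=1$ if $\delta\in[\tfrac12,1]$; (b) $\varepsilon_{2\times 2}(\delta)=\dfrac{2\delta}{1+\delta}$ if $\delta\in[0,\tfrac12)$, and $\varepsilon_{2\times 2}(\delta)=1$ if $\delta\in[\tfrac12,1]$; (c) $\varepsilon_{2\times 2}(\delta)\le\varepsilon(\delta)\le (2\delta)\wedge 1$.
   Context: A pair of random variables $(X,Y)$ on a probability space $(\Omega,\mathcal F,P)$ is called coherent if there exist an event $A\in\mathcal F$ and sub-$\sigma$-fields $\mathcal G,\mathcal H\subseteq\mathcal F$ with $X=P(A\mid\mathcal G)$ and $Y=P(A\mid\mathcal H)$; equivalently $0\le X,Y\le 1$, $X=P(A\mid X)$ and $Y=P(A\mid Y)$ for some event $A$. Such a pair is called $m\times n$ coherent if $X$ takes at most $m$ possible values and $Y$ at most $n$ possible values. For $\delta\in[0,1]$ define $\varepsilon(\delta)=\sup P(|X-Y|\ge 1-\delta)$, the supremum over all coherent pairs $(X,Y)$ (on all probability spaces), and $\varepsilon_{m\times n}(\delta)$ the same supremum restricted to $m\times n$ coherent pairs. Notation: $x\wedge y=\min(x,y)$. *)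

theory Defs
  imports "HOL-Probability.Probability"
begin

definition is_cond_prob :: "'a measure \<Rightarrow> 'a set \<Rightarrow> 'a measure \<Rightarrow> ('a \<Rightarrow> real) \<Rightarrow> bool" where
  "is_cond_prob M A G X \<longleftrightarrow>
     subalgebra M G \<and> X \<in> borel_measurable G \<and>
     (AE \<omega> in M. X \<omega> = real_cond_exp M G (indicator A) \<omega>)"

definition coherent :: "'a measure \<Rightarrow> ('a \<Rightarrow> real) \<Rightarrow> ('a \<Rightarrow> real) \<Rightarrow> bool" where
  "coherent M X Y \<longleftrightarrow> prob_space M \<and>
     (\<exists>A \<in> sets M. \<exists>G H. is_cond_prob M A G X \<and> is_cond_prob M A H Y)"

definition coherent_mn :: "nat \<Rightarrow> nat \<Rightarrow> 'a measure \<Rightarrow> ('a \<Rightarrow> real) \<Rightarrow> ('a \<Rightarrow> real) \<Rightarrow> bool" where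
  "coherent_mn m n M X Y \<longleftrightarrow> coherent M X Y \<and>
     finite (X ` space M) \<and> card (X ` space M) \<le> m \<and>
     finite (Y ` space M) \<and> card (Y ` space M) \<le> n"

definition eps_vals :: "'a itself \<Rightarrow> real \<Rightarrow> real set" where
  "eps_vals _ \<delta> = {measure M {\<omega> \<in> space M. 1 - \<delta> \<le> \<bar>X \<omega> - Y \<omega>\<bar>} | (M :: 'a measure) X Y.
      coherent M X Y}"

definition eps_mn_vals :: "'a itself \<Rightarrow> nat \<Rightarrow> nat \<Rightarrow> real \<Rightarrow> real set" where
  "eps_mn_vals _ m n \<delta> = {measure M {\<omega> \<in> space M. 1 - \<delta> \<le> \<bar>X \<omega> - Y \<omega>\<bar>} | (M :: 'a measure) X Y.
      coherent_mn m n M X Y}"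

text \<open>The supremum over ALL probability
  spaces is expressed in the main statement by: the value bounds the supremum for every
  type 'a, and is attained as supremum for the (rich enough) type real.\<close>
definition eps_on :: "'a itself \<Rightarrow> real \<Rightarrow> real" where
  "eps_on t \<delta> = Sup (eps_vals t \<delta>)"

definition eps_mn_on :: "'a itself \<Rightarrow> nat \<Rightarrow> nat \<Rightarrow> real \<Rightarrow> real" where
  "eps_mn_on t m n \<delta> = Sup (eps_mn_vals t m n \<delta>)"

end

theory Submission
  imports Defs
begin


lemma rng01:
  fixes x s p :: real
  assumes "0 < s" "x * s = p" "0 \<le> p" "p \<le> s"
  shows "0 \<le> x \<and> x \<le> 1"
proof -
  have "x = p / s" using assms by (simp add: field_simps)
  then show ?thesis using assms by (simp add: divide_le_eq_1 )
qed

lemma CIgen: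
  fixes u v a b c e :: real
  assumes "0 \<le> u" "v \<le> 1" "1 - e \<le> v - u" "0 \<le> a" "0 \<le> b" "0 \<le> c"
    "(v - u) * a \<le> u * b + (1 - v) * c"
  shows "(1 - e) * a \<le> e * (b + c)"
proof -
  have "(1 - e) * a \<le> (v - u) * a" using assms by (intro mult_right_mono) auto
  also have "\<dots> \<le> u * b + (1 - v) * c" by fact
  also have "\<dots> \<le> e * b + e * c" using assms by (intro add_mono mult_right_mono) auto
  finally show ?thesis by (simp add: algebra_simps)
qed

lemma RLgen:
  fixes u v1 v2 c1 c2 f1 f2 e :: real
  assumes "0 \<le> u" "v1 \<le> 1" "v2 \<le> 1" "1 - e \<le> v1 - u" "1 - e \<le> v2 - u" "e < 1/2"
    "0 \<le> c1" "0 \<le> c2" "0 \<le> f1" "0 \<le> f2" "c1 + c2 + f1 + f2 = 1"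
    "(v1 - u) * c1 \<le> u * c2 + (1 - v1) * f1"
    "(v2 - u) * c2 \<le> u * c1 + (1 - v2) * f2"
  shows "c1 + c2 \<le> e"
proof -
  have h1: "(1 - e) * c1 \<le> (v1 - u) * c1" using assms by (intro mult_right_mono) auto
  have h2: "(1 - e) * c2 \<le> (v2 - u) * c2" using assms by (intro mult_right_mono) auto
  have h3: "(1 - v1) * f1 \<le> (e - u) * f1" using assms by (intro mult_right_mono) auto
  have h4: "(1 - v2) * f2 \<le> (e - u) * f2" using assms by (intro mult_right_mono) auto
  have "(1 - e) * (c1 + c2) \<le> u * (c1 + c2) + (e - u) * (f1 + f2)"
    using h1 h2 h3 h4 assms(12,13) by (simp add: algebra_simps)
  moreover have "f1 + f2 = 1 - (c1 + c2)" using assms(11) by simp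
  ultimately have "(1 - e) * (c1 + c2) \<le> u * (c1 + c2) + (e - u) * (1 - (c1 + c2))" by simp
  then have "(c1 + c2) * (1 - 2*u) \<le> e - u"
    by (simp add: algebra_simps)
  also have "\<dots> \<le> e * (1 - 2*u)" 
  proof -
    have "0 \<le> u * (1 - 2*e)" using assms by simp
    then show ?thesis by (simp add: algebra_simps)
  qed
  finally show ?thesis using assms by (simp add: mult_le_cancel_right)
qed

lemma TLgen:
  fixes x1 x2 y1 y2 s1 s2 t1 t2 e :: real
  assumes "x1 \<le> e" "x2 \<le> e" "1 - e \<le> y1" "1 - e \<le> y2" "e < 1/2"
    "0 \<le> s1" "0 \<le> s2" "0 \<le> t1" "0 \<le> t2" "s1 + s2 = 1" "t1 + t2 = 1"
    "x1 * s1 + x2 * s2 = y1 * t1 + y2 * t2"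
  shows False
proof -
  have "x1 * s1 + x2 * s2 \<le> e * s1 + e * s2" using assms by (intro add_mono mult_right_mono) auto
  moreover have "(1 - e) * t1 + (1 - e) * t2 \<le> y1 * t1 + y2 * t2" using assms by (intro add_mono mult_right_mono) auto
  ultimately have "(1 - e) * (t1 + t2) \<le> e * (s1 + s2)" using assms(12) by (simp add: algebra_simps)
  then show False using assms by simp
qed

lemma No3gen:
  fixes x1 x2 y1 y2 s1 s2 t1 t2 e :: real
  assumes "0 \<le> x1" "x1 \<le> 1" "0 \<le> x2" "x2 \<le> 1" "0 \<le> y1" "y1 \<le> 1" "0 \<le> y2" "y2 \<le> 1"
    "e < 1/2" "0 \<le> s1" "0 \<le> s2" "0 \<le> t1" "0 \<le> t2" "s1 + s2 = 1" "t1 + t2 = 1"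
    "x1 * s1 + x2 * s2 = y1 * t1 + y2 * t2"
    "1 - e \<le> \<bar>x1 - y1\<bar>" "1 - e \<le> \<bar>x1 - y2\<bar>" "1 - e \<le> \<bar>x2 - y1\<bar>"
  shows False
proof -
  have "(x1 \<le> e \<and> x2 \<le> e \<and> 1 - e \<le> y1 \<and> 1 - e \<le> y2) \<or> (1 - e \<le> x1 \<and> 1 - e \<le> x2 \<and> y1 \<le> e \<and> y2 \<le> e)"
    using assms(1-9,17-19) by (auto simp: abs_if split: if_splits)
  then show False
  proof
    assume "x1 \<le> e \<and> x2 \<le> e \<and> 1 - e \<le> y1 \<and> 1 - e \<le> y2"
    then show False using TLgen[of x1 e x2 y1 y2 s1 s2 t1 t2] assms by auto
  next
    assume h: "1 - e \<le> x1 \<and> 1 - e \<le> x2 \<and> y1 \<le> e \<and> y2 \<le> e"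
    have "(1-x1) * s1 + (1-x2) * s2 = (1-y1) * t1 + (1-y2) * t2"
      using assms(14-16) by (simp add: algebra_simps)
    then show False using TLgen[of "1-x1" e "1-x2" "1-y1" "1-y2" s1 s2 t1 t2] h assms by auto
  qed
qed

lemma FL:
  fixes e x1 x2 y1 y2 a11 a12 a21 a22 p11 p12 p21 p22 :: real
  assumes e0: "0 \<le> e" and e1: "e < 1/2"
   and p: "0 \<le> p11" "p11 \<le> a11" "0 \<le> p12" "p12 \<le> a12" "0 \<le> p21" "p21 \<le> a21" "0 \<le> p22" "p22 \<le> a22"
   and sum1: "a11 + a12 + a21 + a22 = 1"
   and ex1: "x1*(a11+a12) = p11+p12" and ex2: "x2*(a21+a22) = p21+p22"
   and ey1: "y1*(a11+a21) = p11+p21" and ey2: "y2*(a12+a22) = p12+p22"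
  shows "(if 1-e \<le> \<bar>x1-y1\<bar> then a11 else 0) + (if 1-e \<le> \<bar>x1-y2\<bar> then a12 else 0)
    + (if 1-e \<le> \<bar>x2-y1\<bar> then a21 else 0) + (if 1-e \<le> \<bar>x2-y2\<bar> then a22 else 0) \<le> 2*e/(1+e)"
proof -
  have a: "0 \<le> a11" "0 \<le> a12" "0 \<le> a21" "0 \<le> a22" using p by auto
  have rx1: "0 \<le> x1 \<and> x1 \<le> 1" if "0 < a11 + a12"
    using rng01[OF that ex1] p by auto
  have rx2: "0 \<le> x2 \<and> x2 \<le> 1" if "0 < a21 + a22"
    using rng01[OF that ex2] p by auto
  have ry1: "0 \<le> y1 \<and> y1 \<le> 1" if "0 < a11 + a21"
    using rng01[OF that ey1] p by auto
  have ry2: "0 \<le> y2 \<and> y2 \<le> 1" if "0 < a12 + a22"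
    using rng01[OF that ey2] p by auto
  have ex1': "x1*a11 + x1*a12 = p11+p12" using ex1 by (simp add: algebra_simps)
  have ex2': "x2*a21 + x2*a22 = p21+p22" using ex2 by (simp add: algebra_simps)
  have ey1': "y1*a11 + y1*a21 = p11+p21" using ey1 by (simp add: algebra_simps)
  have ey2': "y2*a12 + y2*a22 = p12+p22" using ey2 by (simp add: algebra_simps)
  have I11: "(y1 - x1) * a11 \<le> x1 * a12 + (1 - y1) * a21"
    using ex1' ey1' p by (simp add: algebra_simps)
  have I12: "(y2 - x1) * a12 \<le> x1 * a11 + (1 - y2) * a22"
    using ex1' ey2' p by (simp add: algebra_simps)
  have I21: "(y1 - x2) * a21 \<le> x2 * a22 + (1 - y1) * a11"
    using ex2' ey1' p by (simp add: algebra_simps)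
  have I22: "(y2 - x2) * a22 \<le> x2 * a21 + (1 - y2) * a12"
    using ex2' ey2' p by (simp add: algebra_simps)
  have II11: "((1-y1) - (1-x1)) * a11 \<le> (1-x1) * a12 + (1 - (1-y1)) * a21"
    using ex1' ey1' p by (simp add: algebra_simps)
  have II12: "((1-y2) - (1-x1)) * a12 \<le> (1-x1) * a11 + (1 - (1-y2)) * a22"
    using ex1' ey2' p by (simp add: algebra_simps)
  have II21: "((1-y1) - (1-x2)) * a21 \<le> (1-x2) * a22 + (1 - (1-y1)) * a11"
    using ex2' ey1' p by (simp add: algebra_simps)
  have II22: "((1-y2) - (1-x2)) * a22 \<le> (1-x2) * a21 + (1 - (1-y2)) * a12"
    using ex2' ey2' p by (simp add: algebra_simps)
  define b11 where "b11 = (1-e \<le> \<bar>x1-y1\<bar> \<and> 0 < a11)"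
  define b12 where "b12 = (1-e \<le> \<bar>x1-y2\<bar> \<and> 0 < a12)"
  define b21 where "b21 = (1-e \<le> \<bar>x2-y1\<bar> \<and> 0 < a21)"
  define b22 where "b22 = (1-e \<le> \<bar>x2-y2\<bar> \<and> 0 < a22)"
  have CI11: "(1-e) * a11 \<le> e * (a12 + a21)" if "b11"
  proof -
    have r: "0 \<le> x1 \<and> x1 \<le> 1" "0 \<le> y1 \<and> y1 \<le> 1" using that rx1 ry1 a b11_def by auto
    show ?thesis
    proof (cases "1 - e \<le> y1 - x1")
      case True then show ?thesis using CIgen[OF _ _ True _ _ _ I11] r a by auto
    next
      case False then have "1 - e \<le> (1-y1) - (1-x1)" using that b11_def by (auto simp: abs_if split: if_splits)
      then show ?thesis using CIgen[OF _ _ _ _ _ _ II11] r a by auto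
    qed
  qed
  have CI12: "(1-e) * a12 \<le> e * (a11 + a22)" if "b12"
  proof -
    have r: "0 \<le> x1 \<and> x1 \<le> 1" "0 \<le> y2 \<and> y2 \<le> 1" using that rx1 ry2 a b12_def by auto
    show ?thesis
    proof (cases "1 - e \<le> y2 - x1")
      case True then show ?thesis using CIgen[OF _ _ True _ _ _ I12] r a by auto
    next
      case False then have "1 - e \<le> (1-y2) - (1-x1)" using that b12_def by (auto simp: abs_if split: if_splits)
      then show ?thesis using CIgen[OF _ _ _ _ _ _ II12] r a by auto
    qed
  qed
  have CI21: "(1-e) * a21 \<le> e * (a22 + a11)" if "b21"
  proof -
    have r: "0 \<le> x2 \<and> x2 \<le> 1" "0 \<le> y1 \<and> y1 \<le> 1" using that rx2 ry1 a b21_def by auto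
    show ?thesis
    proof (cases "1 - e \<le> y1 - x2")
      case True then show ?thesis using CIgen[OF _ _ True _ _ _ I21] r a by auto
    next
      case False then have "1 - e \<le> (1-y1) - (1-x2)" using that b21_def by (auto simp: abs_if split: if_splits)
      then show ?thesis using CIgen[OF _ _ _ _ _ _ II21] r a by auto
    qed
  qed
  have CI22: "(1-e) * a22 \<le> e * (a21 + a12)" if "b22"
  proof -
    have r: "0 \<le> x2 \<and> x2 \<le> 1" "0 \<le> y2 \<and> y2 \<le> 1" using that rx2 ry2 a b22_def by auto
    show ?thesis
    proof (cases "1 - e \<le> y2 - x2")
      case True then show ?thesis using CIgen[OF _ _ True _ _ _ I22] r a by auto
    next
      case False then have "1 - e \<le> (1-y2) - (1-x2)" using that b22_def by (auto simp: abs_if split: if_splits)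
      then show ?thesis using CIgen[OF _ _ _ _ _ _ II22] r a by auto
    qed
  qed
  have R1: "a11 + a12 \<le> e" if "b11" "b12"
  proof -
    have r: "0 \<le> x1 \<and> x1 \<le> 1" "0 \<le> y1 \<and> y1 \<le> 1" "0 \<le> y2 \<and> y2 \<le> 1"
      using that rx1 ry1 ry2 a b11_def b12_def by auto
    have s: "a11 + a12 + a21 + a22 = 1" using sum1 by simp
    show ?thesis
    proof (cases "1 - e \<le> y1 - x1")
      case True
      then have "1 - e \<le> y2 - x1" using that r e1 b11_def b12_def by (auto simp: abs_if split: if_splits)
      then show ?thesis using RLgen[OF _ _ _ True _ e1 _ _ _ _ s I11 I12] r a by auto
    next
      case False
      then have h1: "1 - e \<le> (1-y1) - (1-x1)" using that b11_def by (auto simp: abs_if split: if_splits)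
      then have "1 - e \<le> (1-y2) - (1-x1)" using that r e1 b11_def b12_def by (auto simp: abs_if split: if_splits)
      then show ?thesis using RLgen[OF _ _ _ h1 _ e1 _ _ _ _ s II11 II12] r a by auto
    qed
  qed
  have R2: "a21 + a22 \<le> e" if "b21" "b22"
  proof -
    have r: "0 \<le> x2 \<and> x2 \<le> 1" "0 \<le> y1 \<and> y1 \<le> 1" "0 \<le> y2 \<and> y2 \<le> 1"
      using that rx2 ry1 ry2 a b21_def b22_def by auto
    have s: "a21 + a22 + a11 + a12 = 1" using sum1 by simp
    show ?thesis
    proof (cases "1 - e \<le> y1 - x2")
      case True
      then have "1 - e \<le> y2 - x2" using that r e1 b21_def b22_def by (auto simp: abs_if split: if_splits)
      then show ?thesis using RLgen[OF _ _ _ True _ e1 _ _ _ _ s I21 I22] r a by auto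
    next
      case False
      then have h1: "1 - e \<le> (1-y1) - (1-x2)" using that b21_def by (auto simp: abs_if split: if_splits)
      then have "1 - e \<le> (1-y2) - (1-x2)" using that r e1 b21_def b22_def by (auto simp: abs_if split: if_splits)
      then show ?thesis using RLgen[OF _ _ _ h1 _ e1 _ _ _ _ s II21 II22] r a by auto
    qed
  qed
  have C1: "a11 + a21 \<le> e" if "b11" "b21"
  proof -
    have r: "0 \<le> y1 \<and> y1 \<le> 1" "0 \<le> x1 \<and> x1 \<le> 1" "0 \<le> x2 \<and> x2 \<le> 1"
      using that ry1 rx1 rx2 a b11_def b21_def by auto
    have s: "a11 + a21 + a12 + a22 = 1" using sum1 by simp
    show ?thesis
    proof (cases "1 - e \<le> y1 - x1")
      case True
      then have h1: "1 - e \<le> (1-x1) - (1-y1)" by simp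
      have "1 - e \<le> y1 - x2" using True that r e1 b11_def b21_def by (auto simp: abs_if split: if_splits)
      then have h2: "1 - e \<le> (1-x2) - (1-y1)" by simp
      have q1: "((1-x1) - (1-y1)) * a11 \<le> (1-y1) * a21 + (1 - (1-x1)) * a12" using I11 by (simp add: algebra_simps)
      have q2: "((1-x2) - (1-y1)) * a21 \<le> (1-y1) * a11 + (1 - (1-x2)) * a22" using I21 by (simp add: algebra_simps)
      show ?thesis using RLgen[OF _ _ _ h1 h2 e1 _ _ _ _ s q1 q2] r a by auto
    next
      case False
      then have h1: "1 - e \<le> x1 - y1" using that b11_def by (auto simp: abs_if split: if_splits)
      then have h2: "1 - e \<le> x2 - y1" using that r e1 b11_def b21_def by (auto simp: abs_if split: if_splits)
      have q1: "(x1 - y1) * a11 \<le> y1 * a21 + (1 - x1) * a12" using II11 by (simp add: algebra_simps)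
      have q2: "(x2 - y1) * a21 \<le> y1 * a11 + (1 - x2) * a22" using II21 by (simp add: algebra_simps)
      show ?thesis using RLgen[OF _ _ _ h1 h2 e1 _ _ _ _ s q1 q2] r a by auto
    qed
  qed
  have C2: "a12 + a22 \<le> e" if "b12" "b22"
  proof -
    have r: "0 \<le> y2 \<and> y2 \<le> 1" "0 \<le> x1 \<and> x1 \<le> 1" "0 \<le> x2 \<and> x2 \<le> 1"
      using that ry2 rx1 rx2 a b12_def b22_def by auto
    have s: "a12 + a22 + a11 + a21 = 1" using sum1 by simp
    show ?thesis
    proof (cases "1 - e \<le> y2 - x1")
      case True
      then have h1: "1 - e \<le> (1-x1) - (1-y2)" by simp
      have "1 - e \<le> y2 - x2" using True that r e1 b12_def b22_def by (auto simp: abs_if split: if_splits)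
      then have h2: "1 - e \<le> (1-x2) - (1-y2)" by simp
      have q1: "((1-x1) - (1-y2)) * a12 \<le> (1-y2) * a22 + (1 - (1-x1)) * a11" using I12 by (simp add: algebra_simps)
      have q2: "((1-x2) - (1-y2)) * a22 \<le> (1-y2) * a12 + (1 - (1-x2)) * a21" using I22 by (simp add: algebra_simps)
      show ?thesis using RLgen[OF _ _ _ h1 h2 e1 _ _ _ _ s q1 q2] r a by auto
    next
      case False
      then have h1: "1 - e \<le> x1 - y2" using that b12_def by (auto simp: abs_if split: if_splits)
      then have h2: "1 - e \<le> x2 - y2" using that r e1 b12_def b22_def by (auto simp: abs_if split: if_splits)
      have q1: "(x1 - y2) * a12 \<le> y2 * a22 + (1 - x1) * a11" using II12 by (simp add: algebra_simps)
      have q2: "(x2 - y2) * a22 \<le> y2 * a12 + (1 - x2) * a21" using II22 by (simp add: algebra_simps)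
      show ?thesis using RLgen[OF _ _ _ h1 h2 e1 _ _ _ _ s q1 q2] r a by auto
    qed
  qed
  have eq: "x1 * (a11+a12) + x2 * (a21+a22) = y1 * (a11+a21) + y2 * (a12+a22)"
    using ex1 ex2 ey1 ey2 by simp
  have N1: "\<not> (b11 \<and> b12 \<and> b21)"
  proof
    assume h: "b11 \<and> b12 \<and> b21"
    then have "0 \<le> x1 \<and> x1 \<le> 1" "0 \<le> x2 \<and> x2 \<le> 1" "0 \<le> y1 \<and> y1 \<le> 1" "0 \<le> y2 \<and> y2 \<le> 1"
      using rx1 rx2 ry1 ry2 a b11_def b12_def b21_def by auto
    then show False using No3gen[of x1 x2 y1 y2 e "a11+a12" "a21+a22" "a11+a21" "a12+a22"] h eq a sum1 e1
      b11_def b12_def b21_def by auto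
  qed
  have N2: "\<not> (b11 \<and> b12 \<and> b22)"
  proof
    assume h: "b11 \<and> b12 \<and> b22"
    then have "0 \<le> x1 \<and> x1 \<le> 1" "0 \<le> x2 \<and> x2 \<le> 1" "0 \<le> y1 \<and> y1 \<le> 1" "0 \<le> y2 \<and> y2 \<le> 1"
      using rx1 rx2 ry1 ry2 a b11_def b12_def b22_def by auto
    then show False using No3gen[of x1 x2 y2 y1 e "a11+a12" "a21+a22" "a12+a22" "a11+a21"] h eq a sum1 e1
      b11_def b12_def b22_def by auto
  qed
  have N3: "\<not> (b11 \<and> b21 \<and> b22)"
  proof
    assume h: "b11 \<and> b21 \<and> b22"
    then have "0 \<le> x1 \<and> x1 \<le> 1" "0 \<le> x2 \<and> x2 \<le> 1" "0 \<le> y1 \<and> y1 \<le> 1" "0 \<le> y2 \<and> y2 \<le> 1"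
      using rx1 rx2 ry1 ry2 a b11_def b21_def b22_def by auto
    then show False using No3gen[of x2 x1 y1 y2 e "a21+a22" "a11+a12" "a11+a21" "a12+a22"] h eq a sum1 e1
      b11_def b21_def b22_def by auto
  qed
  have N4: "\<not> (b12 \<and> b21 \<and> b22)"
  proof
    assume h: "b12 \<and> b21 \<and> b22"
    then have "0 \<le> x1 \<and> x1 \<le> 1" "0 \<le> x2 \<and> x2 \<le> 1" "0 \<le> y1 \<and> y1 \<le> 1" "0 \<le> y2 \<and> y2 \<le> 1"
      using rx1 rx2 ry1 ry2 a b12_def b21_def b22_def by auto
    then show False using No3gen[of x2 x1 y2 y1 e "a21+a22" "a11+a12" "a12+a22" "a11+a21"] h eq a sum1 e1
      b12_def b21_def b22_def by auto
  qed
  have g: "(if 1-e \<le> \<bar>x1-y1\<bar> then a11 else 0) + (if 1-e \<le> \<bar>x1-y2\<bar> then a12 else 0)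
    + (if 1-e \<le> \<bar>x2-y1\<bar> then a21 else 0) + (if 1-e \<le> \<bar>x2-y2\<bar> then a22 else 0)
    = (if b11 then a11 else 0) + (if b12 then a12 else 0) + (if b21 then a21 else 0) + (if b22 then a22 else 0)"
    using a unfolding b11_def b12_def b21_def b22_def by auto
  have ea: "0 \<le> e * a11" "0 \<le> e * a12" "0 \<le> e * a21" "0 \<le> e * a22" using a e0 by auto
  have es: "e * a11 + e * a12 + e * a21 + e * a22 = e" proof -
    have "e * (a11 + a12 + a21 + a22) = e" using sum1 by simp
    then show ?thesis by (simp add: algebra_simps)
  qed
  have CI11': "b11 \<Longrightarrow> a11 - e*a11 \<le> e*a12 + e*a21" using CI11 by (simp add: algebra_simps)
  have CI12': "b12 \<Longrightarrow> a12 - e*a12 \<le> e*a11 + e*a22" using CI12 by (simp add: algebra_simps)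
  have CI21': "b21 \<Longrightarrow> a21 - e*a21 \<le> e*a22 + e*a11" using CI21 by (simp add: algebra_simps)
  have CI22': "b22 \<Longrightarrow> a22 - e*a22 \<le> e*a21 + e*a12" using CI22 by (simp add: algebra_simps)
  have key0: "(if b11 then a11 + e*a11 else 0) + (if b12 then a12 + e*a12 else 0) + (if b21 then a21 + e*a21 else 0) + (if b22 then a22 + e*a22 else 0) \<le> 2 * e"
    using CI11' CI12' CI21' CI22' R1 R2 C1 C2 N1 N2 N3 N4 ea es a sum1 e0 e1
    by (smt (verit))
  have key: "((if b11 then a11 else 0) + (if b12 then a12 else 0) + (if b21 then a21 else 0) + (if b22 then a22 else 0)) * (1 + e) \<le> 2 * e"
  proof -
    have "((if b11 then a11 else 0) + (if b12 then a12 else 0) + (if b21 then a21 else 0) + (if b22 then a22 else 0)) * (1 + e)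
      = (if b11 then a11 + e*a11 else 0) + (if b12 then a12 + e*a12 else 0) + (if b21 then a21 + e*a21 else 0) + (if b22 then a22 + e*a22 else 0)"
      by (cases b11; cases b12; cases b21; cases b22; simp add: algebra_simps)
    then show ?thesis using key0 by simp
  qed
  show ?thesis unfolding g using key e0 by (simp add: pos_le_divide_eq add_pos_nonneg)
qed


lemma cp_facts:
  assumes P: "prob_space M" and C: "is_cond_prob M A G X" and A: "A \<in> sets M"
  shows cp_int: "integrable M X" and cp_meas: "X \<in> borel_measurable M"
    and cp_sets: "sets G \<subseteq> sets M" and cp_space: "space G = space M"
    and cp_measG: "X \<in> borel_measurable G"
    and cp_AE: "AE x in M. X x = real_cond_exp M G (indicator A) x"
proof -
  interpret prob_space M by fact
  have sub: "subalgebra M G" and XG: "X \<in> borel_measurable G" and ae: "AE x in M. X x = real_cond_exp M G (indicator A) x"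
    using C unfolding is_cond_prob_def by auto
  interpret S: finite_measure_subalgebra M G by unfold_locales (rule sub)
  show "X \<in> borel_measurable M" by (rule measurable_from_subalg[OF sub XG])
  have iA: "integrable M (indicator A :: _ \<Rightarrow> real)" using A by (intro integrable_real_indicator) (auto simp: less_top[symmetric])
  show "integrable M X"
    using integrable_cong_AE[OF measurable_from_subalg[OF sub XG] borel_measurable_cond_exp2 ae] S.real_cond_exp_int(1)[OF iA]
    by simp
  show "sets G \<subseteq> sets M" "space G = space M" using sub unfolding subalgebra_def by auto
  show "X \<in> borel_measurable G" by fact
  show "AE x in M. X x = real_cond_exp M G (indicator A) x" by fact
qed

lemma cp_setint:
  assumes P: "prob_space M" and C: "is_cond_prob M A G X" and A: "A \<in> sets M" and S: "S \<in> sets G"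
  shows "(LINT x:S|M. X x) = measure M (A \<inter> S)"
proof -
  interpret prob_space M by fact
  have sub: "subalgebra M G" and ae: "AE x in M. X x = real_cond_exp M G (indicator A) x"
    using C unfolding is_cond_prob_def by auto
  interpret Sb: finite_measure_subalgebra M G by unfold_locales (rule sub)
  have SM: "S \<in> sets M" using cp_sets[OF P C A] S by auto
  have iA: "integrable M (indicator A :: _ \<Rightarrow> real)" using A by (intro integrable_real_indicator) (auto simp: less_top[symmetric])
  have "(LINT x:S|M. X x) = (LINT x:S|M. real_cond_exp M G (indicator A) x)"
    unfolding set_lebesgue_integral_def
    apply (rule integral_cong_AE)
    using cp_meas[OF P C A] SM ae by auto
  also have "\<dots> = (LINT x:S|M. indicator A x)"
    using Sb.real_cond_exp_intA[OF iA S] by simp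
  also have "\<dots> = measure M (A \<inter> S)"
    unfolding set_lebesgue_integral_def
    using A SM by (simp add: indicator_inter_arith[symmetric] Int_commute)
  finally show ?thesis .
qed

lemma cp_lower:
  assumes P: "prob_space M" and C: "is_cond_prob M A G X" and A: "A \<in> sets M" and S: "S \<in> sets G"
    and t: "\<And>x. x \<in> S \<Longrightarrow> t \<le> X x"
  shows "t * measure M S \<le> measure M (A \<inter> S)"
proof -
  interpret prob_space M by fact
  have SM: "S \<in> sets M" using cp_sets[OF P C A] S by auto
  have "t * measure M S = (LINT x:S|M. t)" using SM by (simp add: set_integral_const)
  also have "\<dots> \<le> (LINT x:S|M. X x)"
    apply (rule set_integral_mono)
    unfolding set_integrable_def
      apply (rule integrable_indicator) using SM apply (auto simp: less_top[symmetric])[2]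
     apply (rule integrable_mult_indicator[OF SM cp_int[OF P C A]])
    using t by auto
  also have "\<dots> = measure M (A \<inter> S)" by (rule cp_setint[OF P C A S])
  finally show ?thesis .
qed

lemma cp_upper:
  assumes P: "prob_space M" and C: "is_cond_prob M A G X" and A: "A \<in> sets M" and S: "S \<in> sets G"
    and t: "\<And>x. x \<in> S \<Longrightarrow> X x \<le> t"
  shows "measure M (A \<inter> S) \<le> t * measure M S"
proof -
  interpret prob_space M by fact
  have SM: "S \<in> sets M" using cp_sets[OF P C A] S by auto
  have "measure M (A \<inter> S) = (LINT x:S|M. X x)" by (rule cp_setint[OF P C A S, symmetric])
  also have "\<dots> \<le> (LINT x:S|M. t)"
    apply (rule set_integral_mono)
    unfolding set_integrable_def
      apply (rule integrable_mult_indicator[OF SM cp_int[OF P C A]])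
     apply (rule integrable_indicator) using SM apply (auto simp: less_top[symmetric])[2]
    using t by auto
  also have "\<dots> = t * measure M S" using SM by (simp add: set_integral_const)
  finally show ?thesis .
qed

lemma cp_AE01:
  assumes P: "prob_space M" and C: "is_cond_prob M A G X" and A: "A \<in> sets M"
  shows "AE x in M. 0 \<le> X x \<and> X x \<le> 1"
proof -
  interpret prob_space M by fact
  have sub: "subalgebra M G" using C unfolding is_cond_prob_def by auto
  interpret Sb: finite_measure_subalgebra M G by unfold_locales (rule sub)
  have iA: "integrable M (indicator A :: _ \<Rightarrow> real)" using A by (intro integrable_real_indicator) (auto simp: less_top[symmetric])
  have "AE x in M. 0 \<le> real_cond_exp M G (indicator A) x"
    by (rule Sb.real_cond_exp_ge_c[OF iA]) auto
  moreover have "AE x in M. real_cond_exp M G (indicator A) x \<le> 1"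
    by (rule Sb.real_cond_exp_le_c[OF iA]) (auto simp: indicator_def)
  ultimately show ?thesis using cp_AE[OF P C A] by eventually_elim auto
qed

lemma cp_construct:
  assumes P: "prob_space M" and A: "A \<in> sets M" and S: "S \<in> sets M"
    and hu: "u * measure M S = measure M (A \<inter> S)"
    and hv: "v * measure M (space M - S) = measure M (A \<inter> (space M - S))"
  shows "is_cond_prob M A (sigma (space M) {S}) (\<lambda>\<omega>. if \<omega> \<in> S then u else v)"
proof -
  interpret prob_space M by fact
  let ?G = "sigma (space M) {S}"
  let ?X = "\<lambda>\<omega>. if \<omega> \<in> S then u else v"
  have Ssp: "S \<subseteq> space M" using S sets.sets_into_space by auto
  have sG: "sets ?G = {{}, S, space M - S, space M}"
    using sigma_sets_singleton[OF Ssp] Ssp by (simp add: sets_measure_of)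
  have spG: "space ?G = space M" using Ssp by (simp add: space_measure_of_conv)
  have sub: "subalgebra M ?G" unfolding subalgebra_def using sG spG S by auto
  have SG: "S \<in> sets ?G" using sG by auto
  have XG: "?X \<in> borel_measurable ?G"
    by (rule measurable_If_set) (use SG spG Ssp in \<open>auto simp: Int_absorb2\<close>)
  interpret Sb: finite_measure_subalgebra M ?G by unfold_locales (rule sub)
  have XM: "?X \<in> borel_measurable M" by (rule measurable_from_subalg[OF sub XG])
  have iX: "integrable M ?X"
    by (rule integrable_const_bound[where B="\<bar>u\<bar> + \<bar>v\<bar>"]) (use XM in auto)
  have iA: "integrable M (indicator A :: _ \<Rightarrow> real)" using A by (intro integrable_real_indicator) (auto simp: less_top[symmetric])
  have intX: "(LINT x:B|M. ?X x) = u * measure M (B \<inter> S) + v * measure M (B - S)" if B: "B \<in> sets M" for B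
  proof -
    have "(LINT x:B|M. ?X x) = (LINT x|M. u * indicator (B \<inter> S) x + v * indicator (B - S) x)"
      unfolding set_lebesgue_integral_def
      by (rule Bochner_Integration.integral_cong) (auto simp: indicator_def)
    also have "\<dots> = u * measure M (B \<inter> S) + v * measure M (B - S)"
      using B S by (subst Bochner_Integration.integral_add) (auto simp: less_top[symmetric])
    finally show ?thesis .
  qed
  have intA: "(LINT x:B|M. indicator A x) = measure M (A \<inter> B)" if B: "B \<in> sets M" for B
    unfolding set_lebesgue_integral_def
    using A B by (simp add: indicator_inter_arith[symmetric] Int_commute)
  have AU: "measure M A = measure M (A \<inter> S) + measure M (A \<inter> (space M - S))"
  proof -
    have "A = (A \<inter> S) \<union> (A \<inter> (space M - S))" using A sets.sets_into_space by auto
    then have "measure M A = measure M ((A \<inter> S) \<union> (A \<inter> (space M - S)))" by simp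
    also have "\<dots> = measure M (A \<inter> S) + measure M (A \<inter> (space M - S))"
      by (rule finite_measure_Union) (use A S in auto)
    finally show ?thesis .
  qed
  have ch: "(LINT x:B|M. indicator A x) = (LINT x:B|M. ?X x)" if B: "B \<in> sets ?G" for B
  proof -
    have BM: "B \<in> sets M" using B sG S by auto
    have "B = {} \<or> B = S \<or> B = space M - S \<or> B = space M" using B sG by auto
    then show ?thesis
    proof (elim disjE)
      assume "B = {}" then show ?thesis using intX[OF BM] intA[OF BM] by simp
    next
      assume "B = S" then show ?thesis using intX[OF BM] intA[OF BM] hu by (simp add: Int_commute)
    next
      assume b: "B = space M - S"
      have "(space M - S) \<inter> S = {}" by auto
      then show ?thesis using intX[OF BM] intA[OF BM] hv b by (simp add: Int_commute)
    next
      assume b: "B = space M"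
      have "space M \<inter> S = S" using Ssp by auto
      moreover have "A \<inter> space M = A" using A sets.sets_into_space by auto
      ultimately show ?thesis using intX[OF BM] intA[OF BM] hu hv b AU by simp
    qed
  qed
  have "AE x in M. real_cond_exp M ?G (indicator A) x = ?X x"
    by (rule Sb.real_cond_exp_charact[OF ch iA iX XG])
  then have "AE x in M. ?X x = real_cond_exp M ?G (indicator A) x" by eventually_elim simp
  then show ?thesis unfolding is_cond_prob_def using sub XG by simp
qed



lemma arith_a:
  fixes m1 m2 q1 q2 c e :: real
  assumes "0 \<le> e" "e < 1/2" "0 \<le> c" "c \<le> 1" "0 \<le> m1" "0 \<le> m2"
    "(c + (1-e)) * m2 \<le> q2" "q2 \<le> c" "q2 \<le> m2" "q1 \<le> (c - (1-e)) * m1" "0 \<le> q1" "m1 - q1 \<le> 1 - c"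
  shows "m1 + m2 \<le> e"
proof -
  have m1: "m1 \<le> (if c < 1 - e then 0 else e)"
  proof (cases "c < 1 - e")
    case True
    then have "(c - (1-e)) * m1 \<le> 0" using assms by (intro mult_nonpos_nonneg) auto
    then have "(c - (1-e)) * m1 = 0" using assms by linarith
    then show ?thesis using True by simp
  next
    case False
    have "(1 - c + (1-e)) * m1 \<le> 1 - c" using assms by (simp add: algebra_simps)
    also have "\<dots> \<le> (1 - c + (1-e)) * e"
    proof -
      have "0 \<le> (1-e)*(c-(1-e))" using False assms by (intro mult_nonneg_nonneg) auto
      then show ?thesis by (simp add: algebra_simps)
    qed
    finally have "m1 \<le> e" using False assms by (simp add: mult_le_cancel_left)
    then show ?thesis using False by simp
  qed
  have m2: "m2 \<le> (if e < c then 0 else e)"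
  proof (cases "e < c")
    case True
    have "(c + (1-e) - 1) * m2 \<le> 0" using assms by (simp add: algebra_simps)
    moreover have "0 < c + (1-e) - 1" using True by simp
    ultimately have "m2 \<le> 0" by (simp add: mult_le_0_iff)
    then show ?thesis using True by simp
  next
    case False
    have "(c + (1-e)) * m2 \<le> c" using assms by simp
    also have "c \<le> (c + (1-e)) * e"
    proof -
      have "0 \<le> (e - c)*(1-e)" using False assms by (intro mult_nonneg_nonneg) auto
      then show ?thesis by (simp add: algebra_simps)
    qed
    finally have "m2 \<le> e" using False assms by (simp add: mult_le_cancel_left)
    then show ?thesis using False by simp
  qed
  show ?thesis using m1 m2 assms by (auto split: if_splits)
qed

lemma card_le1_const:
  assumes "finite S" "card S \<le> 1" "S \<noteq> {}"
  obtains c where "S = {c}"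
proof -
  have "card S = 1" using assms by (simp add: Suc_leI le_antisym card_gt_0_iff)
  then show ?thesis using that card_1_singletonE by blast
qed

lemma bound_a:
  assumes co: "coherent_mn 1 n M X Y" and e0: "0 \<le> e" and e1: "e < 1/2"
  shows "measure M {\<omega> \<in> space M. 1 - e \<le> \<bar>X \<omega> - Y \<omega>\<bar>} \<le> e"
proof -
  from co obtain A G H where P: "prob_space M" and A: "A \<in> sets M" and CG: "is_cond_prob M A G X"
    and CH: "is_cond_prob M A H Y" and fX: "finite (X ` space M)" and cX: "card (X ` space M) \<le> 1"
    unfolding coherent_mn_def coherent_def by blast
  interpret prob_space M by fact
  obtain c where c: "X ` space M = {c}" using card_le1_const[OF fX cX] not_empty by blast
  then have Xc: "\<And>\<omega>. \<omega> \<in> space M \<Longrightarrow> X \<omega> = c" by auto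
  have spG: "space G = space M" by (rule cp_space[OF P CG A])
  have spH: "space H = space M" by (rule cp_space[OF P CH A])
  have topG: "space M \<in> sets G" using sets.top[of G] spG by simp
  have "c * measure M (space M) \<le> measure M (A \<inter> space M)"
    by (rule cp_lower[OF P CG A topG]) (simp add: Xc)
  moreover have "measure M (A \<inter> space M) \<le> c * measure M (space M)"
    by (rule cp_upper[OF P CG A topG]) (simp add: Xc)
  moreover have "A \<inter> space M = A" using A sets.sets_into_space by auto
  ultimately have cA: "c = measure M A" by (simp add: prob_space)
  have c01: "0 \<le> c" "c \<le> 1" using cA by auto
  have YH[measurable]: "Y \<in> borel_measurable H" by (rule cp_measG[OF P CH A])
  define B1 where "B1 = {\<omega> \<in> space M. Y \<omega> \<le> c - (1-e)}"
  define B2 where "B2 = {\<omega> \<in> space M. c + (1-e) \<le> Y \<omega>}"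
  have "{\<omega> \<in> space H. Y \<omega> \<le> c - (1-e)} \<in> sets H" by measurable
  then have B1H: "B1 \<in> sets H" unfolding B1_def spH .
  have "{\<omega> \<in> space H. c + (1-e) \<le> Y \<omega>} \<in> sets H" by measurable
  then have B2H: "B2 \<in> sets H" unfolding B2_def spH .
  have B1M: "B1 \<in> sets M" and B2M: "B2 \<in> sets M" using B1H B2H cp_sets[OF P CH A] by auto
  have f1: "(c + (1-e)) * measure M B2 \<le> measure M (A \<inter> B2)"
    by (rule cp_lower[OF P CH A B2H]) (simp add: B2_def)
  have f2: "measure M (A \<inter> B2) \<le> c" unfolding cA by (rule finite_measure_mono) (use A in auto)
  have f3: "measure M (A \<inter> B2) \<le> measure M B2" by (rule finite_measure_mono) (use B2M in auto)
  have f4: "measure M (A \<inter> B1) \<le> (c - (1-e)) * measure M B1"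
    by (rule cp_upper[OF P CH A B1H]) (simp add: B1_def)
  have f5: "measure M B1 - measure M (A \<inter> B1) \<le> 1 - c"
  proof -
    have "measure M B1 - measure M (A \<inter> B1) = measure M (B1 - A)"
      using finite_measure_Diff'[OF B1M A] by (simp add: Int_commute)
    also have "\<dots> \<le> measure M (space M - A)" by (rule finite_measure_mono) (use B1_def A in auto)
    also have "\<dots> = 1 - c" using prob_compl[OF A] cA by simp
    finally show ?thesis .
  qed
  have "measure M B1 + measure M B2 \<le> e"
    by (rule arith_a[OF e0 e1 c01 _ _ f1 f2 f3 f4 _ f5]) auto
  moreover have "measure M {\<omega> \<in> space M. 1 - e \<le> \<bar>X \<omega> - Y \<omega>\<bar>} \<le> measure M (B1 \<union> B2)"
    by (rule finite_measure_mono) (use B1M B2M in \<open>auto simp: B1_def B2_def Xc abs_if split: if_splits\<close>)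
  moreover have "measure M (B1 \<union> B2) \<le> measure M B1 + measure M B2" by (rule measure_Un_le[OF B1M B2M])
  ultimately show ?thesis by linarith
qed

lemma bound_c:
  assumes co: "coherent M X Y" and e0: "0 \<le> e" and e1: "e < 1/2"
  shows "measure M {\<omega> \<in> space M. 1 - e \<le> \<bar>X \<omega> - Y \<omega>\<bar>} \<le> 2 * e"
proof -
  from co obtain A G H where P: "prob_space M" and A: "A \<in> sets M" and CG: "is_cond_prob M A G X"
    and CH: "is_cond_prob M A H Y"
    unfolding coherent_def by blast
  interpret prob_space M by fact
  have spG: "space G = space M" by (rule cp_space[OF P CG A])
  have spH: "space H = space M" by (rule cp_space[OF P CH A])
  have XG[measurable]: "X \<in> borel_measurable G" by (rule cp_measG[OF P CG A])
  have YH[measurable]: "Y \<in> borel_measurable H" by (rule cp_measG[OF P CH A])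
  define U where "U = {\<omega> \<in> space M. Y \<omega> \<le> e}"
  define U' where "U' = {\<omega> \<in> space M. 1 - e \<le> Y \<omega>}"
  define V where "V = {\<omega> \<in> space M. 1 - e \<le> X \<omega>}"
  define V' where "V' = {\<omega> \<in> space M. X \<omega> \<le> e}"
  have "{\<omega> \<in> space H. Y \<omega> \<le> e} \<in> sets H" by measurable
  then have UH: "U \<in> sets H" unfolding U_def spH .
  have "{\<omega> \<in> space H. 1 - e \<le> Y \<omega>} \<in> sets H" by measurable
  then have U'H: "U' \<in> sets H" unfolding U'_def spH .
  have "{\<omega> \<in> space G. 1 - e \<le> X \<omega>} \<in> sets G" by measurable
  then have VG: "V \<in> sets G" unfolding V_def spG .
  have "{\<omega> \<in> space G. X \<omega> \<le> e} \<in> sets G" by measurable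
  then have V'G: "V' \<in> sets G" unfolding V'_def spG .
  have UM: "U \<in> sets M" and U'M: "U' \<in> sets M" using UH U'H cp_sets[OF P CH A] by auto
  have VM: "V \<in> sets M" and V'M: "V' \<in> sets M" using VG V'G cp_sets[OF P CG A] by auto
  have g1: "measure M (A \<inter> U) \<le> e * measure M U"
    by (rule cp_upper[OF P CH A UH]) (simp add: U_def)
  have g2: "(1-e) * measure M U' \<le> measure M (A \<inter> U')"
    by (rule cp_lower[OF P CH A U'H]) (simp add: U'_def)
  have g3: "(1-e) * measure M V \<le> measure M (A \<inter> V)"
    by (rule cp_lower[OF P CG A VG]) (simp add: V_def)
  have g4: "measure M (A \<inter> V') \<le> e * measure M V'"
    by (rule cp_upper[OF P CG A V'G]) (simp add: V'_def)
  have UU: "measure M U + measure M U' \<le> 1"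
  proof -
    have "measure M U + measure M U' = measure M (U \<union> U')"
      by (rule finite_measure_Union[symmetric]) (use UM U'M e1 in \<open>auto simp: U_def U'_def\<close>)
    then show ?thesis by simp
  qed
  have VV: "measure M V + measure M V' \<le> 1"
  proof -
    have "measure M V + measure M V' = measure M (V \<union> V')"
      by (rule finite_measure_Union[symmetric]) (use VM V'M e1 in \<open>auto simp: V_def V'_def\<close>)
    then show ?thesis by simp
  qed
  have F1: "measure M (U \<inter> V) \<le> measure M (A \<inter> U) + (measure M V - measure M (A \<inter> V))"
  proof -
    have "measure M (U \<inter> V) \<le> measure M ((A \<inter> U) \<union> (V - A))"
      by (rule finite_measure_mono) (use A UM VM in auto)
    also have "\<dots> \<le> measure M (A \<inter> U) + measure M (V - A)" by (rule measure_Un_le) (use A UM VM in auto)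
    also have "measure M (V - A) = measure M V - measure M (A \<inter> V)"
      using finite_measure_Diff'[OF VM A] by (simp add: Int_commute)
    finally show ?thesis .
  qed
  have F2: "measure M (U' \<inter> V') \<le> measure M (A \<inter> V') + (measure M U' - measure M (A \<inter> U'))"
  proof -
    have "measure M (U' \<inter> V') \<le> measure M ((A \<inter> V') \<union> (U' - A))"
      by (rule finite_measure_mono) (use A U'M V'M in auto)
    also have "\<dots> \<le> measure M (A \<inter> V') + measure M (U' - A)" by (rule measure_Un_le) (use A U'M V'M in auto)
    also have "measure M (U' - A) = measure M U' - measure M (A \<inter> U')"
      using finite_measure_Diff'[OF U'M A] by (simp add: Int_commute)
    finally show ?thesis .
  qed
  have ae: "AE \<omega> in M. \<omega> \<in> {\<omega> \<in> space M. 1 - e \<le> \<bar>X \<omega> - Y \<omega>\<bar>} \<longrightarrow> \<omega> \<in> (U \<inter> V) \<union> (U' \<inter> V')"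
    using cp_AE01[OF P CG A] cp_AE01[OF P CH A]
    by eventually_elim (auto simp: U_def U'_def V_def V'_def abs_if split: if_splits)
  have "measure M {\<omega> \<in> space M. 1 - e \<le> \<bar>X \<omega> - Y \<omega>\<bar>} \<le> measure M ((U \<inter> V) \<union> (U' \<inter> V'))"
    by (rule finite_measure_mono_AE[OF ae]) (use UM VM U'M V'M in auto)
  also have "\<dots> \<le> measure M (U \<inter> V) + measure M (U' \<inter> V')" by (rule measure_Un_le) (use UM VM U'M V'M in auto)
  finally have b: "measure M {\<omega> \<in> space M. 1 - e \<le> \<bar>X \<omega> - Y \<omega>\<bar>} \<le> measure M (U \<inter> V) + measure M (U' \<inter> V')" .
  have "e * (measure M U + measure M U') \<le> e" using UU e0 by (simp add: mult_left_le)
  moreover have "e * (measure M V + measure M V') \<le> e" using VV e0 by (simp add: mult_left_le)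
  ultimately show ?thesis using b F1 F2 g1 g2 g3 g4 by (simp add: algebra_simps)
qed



lemma card_le2_pair:
  assumes "finite S" "card S \<le> 2" "S \<noteq> {}"
  obtains a b where "S \<subseteq> {a, b}"
proof -
  have "card S \<noteq> 0" using assms by simp
  then have "card S = 1 \<or> card S = 2" using assms(2) by linarith
  then show ?thesis
  proof
    assume "card S = 1" then obtain a where "S = {a}" by (auto simp: card_Suc_eq)
    then show ?thesis using that[of a a] by auto
  next
    assume "card S = 2" then obtain a b where "S = {a, b}" by (auto simp: card_2_iff)
    then show ?thesis using that by auto
  qed
qed

lemma (in finite_measure) msplit:
  assumes "E \<in> sets M" "T \<in> sets M"
  shows "measure M E = measure M (E \<inter> T) + measure M (E \<inter> (space M - T))"
proof -
  have "E \<inter> (space M - T) = E - T" using assms sets.sets_into_space by auto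
  then show ?thesis using finite_measure_Diff'[OF assms] by simp
qed

lemma (in finite_measure) cell_bad:
  assumes "\<And>\<omega>. \<omega> \<in> C \<Longrightarrow> X \<omega> = x \<and> Y \<omega> = y" "C \<subseteq> space M"
  shows "measure M ({\<omega> \<in> space M. 1 - e \<le> \<bar>X \<omega> - Y \<omega>\<bar>} \<inter> C) = (if 1 - e \<le> \<bar>x - y\<bar> then measure M C else 0)"
proof (cases "1 - e \<le> \<bar>x - y\<bar>")
  case True
  then have "{\<omega> \<in> space M. 1 - e \<le> \<bar>X \<omega> - Y \<omega>\<bar>} \<inter> C = C" using assms by auto
  then show ?thesis using True by simp
next
  case False
  then have "{\<omega> \<in> space M. 1 - e \<le> \<bar>X \<omega> - Y \<omega>\<bar>} \<inter> C = {}" using assms by auto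
  then show ?thesis using False by simp
qed

lemma bound_b:
  assumes co: "coherent_mn 2 2 M X Y" and e0: "0 \<le> e" and e1: "e < 1/2"
  shows "measure M {\<omega> \<in> space M. 1 - e \<le> \<bar>X \<omega> - Y \<omega>\<bar>} \<le> 2 * e / (1 + e)"
proof -
  from co obtain A G H where P: "prob_space M" and A: "A \<in> sets M" and CG: "is_cond_prob M A G X"
    and CH: "is_cond_prob M A H Y" and fX: "finite (X ` space M)" and cX: "card (X ` space M) \<le> 2"
    and fY: "finite (Y ` space M)" and cY: "card (Y ` space M) \<le> 2"
    unfolding coherent_mn_def coherent_def by blast
  interpret prob_space M by fact
  obtain x1 x2 where xx: "X ` space M \<subseteq> {x1, x2}" using card_le2_pair[OF fX cX] not_empty by blast
  obtain y1 y2 where yy: "Y ` space M \<subseteq> {y1, y2}" using card_le2_pair[OF fY cY] not_empty by blast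
  have spG: "space G = space M" by (rule cp_space[OF P CG A])
  have spH: "space H = space M" by (rule cp_space[OF P CH A])
  have XG[measurable]: "X \<in> borel_measurable G" by (rule cp_measG[OF P CG A])
  have YH[measurable]: "Y \<in> borel_measurable H" by (rule cp_measG[OF P CH A])
  have XM[measurable]: "X \<in> borel_measurable M" by (rule cp_meas[OF P CG A])
  have YM[measurable]: "Y \<in> borel_measurable M" by (rule cp_meas[OF P CH A])
  define S1 where "S1 = {\<omega> \<in> space M. X \<omega> = x1}"
  define T1 where "T1 = {\<omega> \<in> space M. Y \<omega> = y1}"
  define Sc where "Sc = space M - S1"
  define Tc where "Tc = space M - T1"
  define Bd where "Bd = {\<omega> \<in> space M. 1 - e \<le> \<bar>X \<omega> - Y \<omega>\<bar>}"
  have "{\<omega> \<in> space G. X \<omega> = x1} \<in> sets G" by measurable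
  then have S1G: "S1 \<in> sets G" unfolding S1_def spG .
  have "{\<omega> \<in> space H. Y \<omega> = y1} \<in> sets H" by measurable
  then have T1H: "T1 \<in> sets H" unfolding T1_def spH .
  have ScG: "Sc \<in> sets G" unfolding Sc_def using S1G sets.compl_sets[OF S1G] spG by simp
  have TcH: "Tc \<in> sets H" unfolding Tc_def using T1H sets.compl_sets[OF T1H] spH by simp
  have S1M: "S1 \<in> sets M" and ScM: "Sc \<in> sets M" using S1G ScG cp_sets[OF P CG A] by auto
  have T1M: "T1 \<in> sets M" and TcM: "Tc \<in> sets M" using T1H TcH cp_sets[OF P CH A] by auto
  have BdM: "Bd \<in> sets M" unfolding Bd_def by measurable
  have XS1: "\<And>\<omega>. \<omega> \<in> S1 \<Longrightarrow> X \<omega> = x1" and XSc: "\<And>\<omega>. \<omega> \<in> Sc \<Longrightarrow> X \<omega> = x2"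
    using xx by (auto simp: S1_def Sc_def)
  have YT1: "\<And>\<omega>. \<omega> \<in> T1 \<Longrightarrow> Y \<omega> = y1" and YTc: "\<And>\<omega>. \<omega> \<in> Tc \<Longrightarrow> Y \<omega> = y2"
    using yy by (auto simp: T1_def Tc_def)
  have S1sp: "S1 \<subseteq> space M" "Sc \<subseteq> space M" "T1 \<subseteq> space M" "Tc \<subseteq> space M"
    by (auto simp: S1_def Sc_def T1_def Tc_def)
  define a11 where "a11 = measure M (S1 \<inter> T1)"
  define a12 where "a12 = measure M (S1 \<inter> Tc)"
  define a21 where "a21 = measure M (Sc \<inter> T1)"
  define a22 where "a22 = measure M (Sc \<inter> Tc)"
  define p11 where "p11 = measure M (A \<inter> (S1 \<inter> T1))"
  define p12 where "p12 = measure M (A \<inter> (S1 \<inter> Tc))"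
  define p21 where "p21 = measure M (A \<inter> (Sc \<inter> T1))"
  define p22 where "p22 = measure M (A \<inter> (Sc \<inter> Tc))"
  have pa: "0 \<le> p11" "p11 \<le> a11" "0 \<le> p12" "p12 \<le> a12" "0 \<le> p21" "p21 \<le> a21" "0 \<le> p22" "p22 \<le> a22"
    unfolding a11_def a12_def a21_def a22_def p11_def p12_def p21_def p22_def
    by (auto intro!: finite_measure_mono simp: S1M ScM T1M TcM)
  have spS: "measure M (space M) = measure M S1 + measure M Sc"
    using msplit[OF sets.top S1M] S1sp by (simp add: Sc_def Int_absorb1)
  have mS1: "measure M S1 = a11 + a12" using msplit[OF S1M T1M] by (simp add: a11_def a12_def Tc_def)
  have mSc: "measure M Sc = a21 + a22" using msplit[OF ScM T1M] by (simp add: a21_def a22_def Tc_def)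
  have mT1: "measure M T1 = a11 + a21" using msplit[OF T1M S1M] by (simp add: a11_def a21_def Sc_def Int_commute)
  have mTc: "measure M Tc = a12 + a22" using msplit[OF TcM S1M] by (simp add: a12_def a22_def Sc_def Int_commute)
  have AS1M: "A \<inter> S1 \<in> sets M" "A \<inter> Sc \<in> sets M" "A \<inter> T1 \<in> sets M" "A \<inter> Tc \<in> sets M"
    using A S1M ScM T1M TcM by auto
  have mAS1: "measure M (A \<inter> S1) = p11 + p12" using msplit[OF AS1M(1) T1M]
    by (simp add: p11_def p12_def Tc_def Int_assoc)
  have mASc: "measure M (A \<inter> Sc) = p21 + p22" using msplit[OF AS1M(2) T1M]
    by (simp add: p21_def p22_def Tc_def Int_assoc)
  have mAT1: "measure M (A \<inter> T1) = p11 + p21" using msplit[OF AS1M(3) S1M]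
    by (simp add: p11_def p21_def Sc_def Int_assoc Int_commute Int_left_commute)
  have mATc: "measure M (A \<inter> Tc) = p12 + p22" using msplit[OF AS1M(4) S1M]
    by (simp add: p12_def p22_def Sc_def Int_assoc Int_commute Int_left_commute)
  have sum1: "a11 + a12 + a21 + a22 = 1" using spS mS1 mSc by (simp add: prob_space)
  have ex1: "x1 * (a11 + a12) = p11 + p12"
    using cp_lower[OF P CG A S1G, of x1] cp_upper[OF P CG A S1G, of x1] XS1 mS1 mAS1 by force
  have ex2: "x2 * (a21 + a22) = p21 + p22"
    using cp_lower[OF P CG A ScG, of x2] cp_upper[OF P CG A ScG, of x2] XSc mSc mASc by force
  have ey1: "y1 * (a11 + a21) = p11 + p21"
    using cp_lower[OF P CH A T1H, of y1] cp_upper[OF P CH A T1H, of y1] YT1 mT1 mAT1 by force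
  have ey2: "y2 * (a12 + a22) = p12 + p22"
    using cp_lower[OF P CH A TcH, of y2] cp_upper[OF P CH A TcH, of y2] YTc mTc mATc by force
  have BdS1M: "Bd \<inter> S1 \<in> sets M" "Bd \<inter> Sc \<in> sets M" using BdM S1M ScM by auto
  have "measure M Bd = measure M (Bd \<inter> S1) + measure M (Bd \<inter> Sc)"
    using msplit[OF BdM S1M] by (simp add: Sc_def)
  also have "measure M (Bd \<inter> S1) = measure M (Bd \<inter> (S1 \<inter> T1)) + measure M (Bd \<inter> (S1 \<inter> Tc))"
    using msplit[OF BdS1M(1) T1M] by (simp add: Tc_def Int_assoc)
  also have "measure M (Bd \<inter> Sc) = measure M (Bd \<inter> (Sc \<inter> T1)) + measure M (Bd \<inter> (Sc \<inter> Tc))"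
    using msplit[OF BdS1M(2) T1M] by (simp add: Tc_def Int_assoc)
  also have "measure M (Bd \<inter> (S1 \<inter> T1)) = (if 1 - e \<le> \<bar>x1 - y1\<bar> then a11 else 0)"
    unfolding Bd_def a11_def by (rule cell_bad) (use XS1 YT1 S1sp in auto)
  also have "measure M (Bd \<inter> (S1 \<inter> Tc)) = (if 1 - e \<le> \<bar>x1 - y2\<bar> then a12 else 0)"
    unfolding Bd_def a12_def by (rule cell_bad) (use XS1 YTc S1sp in auto)
  also have "measure M (Bd \<inter> (Sc \<inter> T1)) = (if 1 - e \<le> \<bar>x2 - y1\<bar> then a21 else 0)"
    unfolding Bd_def a21_def by (rule cell_bad) (use XSc YT1 S1sp in auto)
  also have "measure M (Bd \<inter> (Sc \<inter> Tc)) = (if 1 - e \<le> \<bar>x2 - y2\<bar> then a22 else 0)"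
    unfolding Bd_def a22_def by (rule cell_bad) (use XSc YTc S1sp in auto)
  also have "(if 1 - e \<le> \<bar>x1 - y1\<bar> then a11 else 0) + (if 1 - e \<le> \<bar>x1 - y2\<bar> then a12 else 0)
      + ((if 1 - e \<le> \<bar>x2 - y1\<bar> then a21 else 0) + (if 1 - e \<le> \<bar>x2 - y2\<bar> then a22 else 0)) \<le> 2 * e / (1 + e)"
    using FL[OF e0 e1 pa sum1 ex1 ex2 ey1 ey2] by (simp add: add.assoc)
  finally show ?thesis unfolding Bd_def .
qed



lemma coherent_mn_mono: "coherent_mn m n M X Y \<Longrightarrow> m \<le> m' \<Longrightarrow> n \<le> n' \<Longrightarrow> coherent_mn m' n' M X Y"
  unfolding coherent_mn_def by auto

lemma card_sub2: "S \<subseteq> {a, b} \<Longrightarrow> finite S \<and> card S \<le> 2"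
proof -
  assume h: "S \<subseteq> {a, b}"
  have "card {a, b} \<le> 2" by (cases "a = b") auto
  then show ?thesis using h by (meson card_mono finite.emptyI finite.insertI finite_subset order_trans)
qed

lemma triv_ex: "\<exists>(M::'a measure) X Y. coherent_mn 1 1 M X Y"
proof -
  let ?M = "measure_pmf (return_pmf (undefined::'a))"
  have P: "prob_space ?M" by (rule prob_space_measure_pmf)
  have "is_cond_prob ?M {} (sigma (space ?M) {space ?M}) (\<lambda>\<omega>. if \<omega> \<in> space ?M then 0 else 0)"
    by (rule cp_construct[OF P]) auto
  then have "coherent_mn 1 1 ?M (\<lambda>\<omega>. if \<omega> \<in> space ?M then 0 else 0) (\<lambda>\<omega>. if \<omega> \<in> space ?M then 0 else 0)"
    unfolding coherent_mn_def coherent_def using P by auto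
  then show ?thesis by blast
qed

lemma ex1:
  fixes p :: real
  assumes "0 \<le> p" "p \<le> 1"
  defines "M \<equiv> measure_pmf (pmf_of_list [(1::real, p), (0, 1 - p)])"
  shows "coherent_mn 1 2 M (\<lambda>\<omega>. if \<omega> \<in> UNIV then p else p) (\<lambda>\<omega>. if \<omega> \<in> {1} then 1 else 0)"
    and "measure M {1} = p" and "measure M UNIV = 1"
proof -
  have wf: "pmf_of_list_wf [(1::real, p), (0, 1 - p)]" by (rule pmf_of_list_wfI) (use assms in auto)
  have P: "prob_space M" unfolding M_def by (rule prob_space_measure_pmf)
  have m1: "measure M {1} = p" unfolding M_def by (simp add: measure_pmf_of_list[OF wf])
  have mc: "measure M (UNIV - {1}) = 1 - p" unfolding M_def by (simp add: measure_pmf_of_list[OF wf])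
  have sp: "space M = UNIV" "sets M = UNIV" unfolding M_def by auto
  have mU: "measure M UNIV = 1" using prob_space.prob_space[OF P] sp by simp
  have "is_cond_prob M {1} (sigma (space M) {space M}) (\<lambda>\<omega>. if \<omega> \<in> space M then p else p)"
    by (rule cp_construct[OF P]) (auto simp: sp m1 mU)
  then have c1: "is_cond_prob M {1} (sigma (space M) {space M}) (\<lambda>\<omega>. if \<omega> \<in> UNIV then p else p)" by (simp add: sp)
  have c2: "is_cond_prob M {1} (sigma (space M) {{1}}) (\<lambda>\<omega>. if \<omega> \<in> {1} then 1 else 0)"
    by (rule cp_construct[OF P]) (auto simp: sp m1 Diff_eq)
  have i1: "(\<lambda>\<omega>. if \<omega> \<in> UNIV then p else p) ` space M \<subseteq> {p}" by auto
  have i2: "(\<lambda>\<omega>. if \<omega> \<in> {1} then 1 else 0) ` space M \<subseteq> {1, 0::real}" by auto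
  show "coherent_mn 1 2 M (\<lambda>\<omega>. if \<omega> \<in> UNIV then p else p) (\<lambda>\<omega>. if \<omega> \<in> {1} then 1 else 0)"
    unfolding coherent_mn_def coherent_def using P c1 c2 card_sub2[OF i2] i1
    by (auto simp: sp intro!: exI[of _ "{1}"])
  show "measure M {1} = p" by (rule m1)
  show "measure M UNIV = 1" using prob_space.prob_space[OF P] sp by simp
qed

lemma ex2:
  fixes e :: real
  assumes e0: "0 \<le> e" and e1: "e < 1/2"
  defines "M \<equiv> measure_pmf (pmf_of_list [(1::real, e/(1+e)), (2, e/(1+e)), (3, (1-e)/(1+e))])"
  shows "coherent_mn 2 2 M (\<lambda>\<omega>. if \<omega> \<in> {1} then 0 else 1 - e) (\<lambda>\<omega>. if \<omega> \<in> {2} then 0 else 1 - e)"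
    and "measure M {\<omega> \<in> space M. 1 - e \<le> \<bar>(if \<omega> \<in> {1} then 0 else 1 - e) - (if \<omega> \<in> {2} then 0 else 1 - e)\<bar>} = 2 * e / (1 + e)"
proof -
  have ep: "0 < 1 + e" using e0 by simp
  have wf: "pmf_of_list_wf [(1::real, e/(1+e)), (2, e/(1+e)), (3, (1-e)/(1+e))]"
  proof (rule pmf_of_list_wfI)
    fix x assume "x \<in> set (map snd [(1::real, e/(1+e)), (2, e/(1+e)), (3, (1-e)/(1+e))])"
    then show "0 \<le> x" using e0 e1 ep by auto
  next
    show "sum_list (map snd [(1::real, e/(1+e)), (2, e/(1+e)), (3, (1-e)/(1+e))]) = 1"
      using ep by (simp add: field_simps)
  qed
  have P: "prob_space M" unfolding M_def by (rule prob_space_measure_pmf)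
  have sp: "space M = UNIV" "sets M = UNIV" unfolding M_def by auto
  have m1: "measure M {} = 0" by simp
  have m3: "measure M {3} = (1-e)/(1+e)" unfolding M_def by (simp add: measure_pmf_of_list[OF wf])
  have mc1: "measure M (UNIV - {1}) = e/(1+e) + (1-e)/(1+e)" unfolding M_def by (simp add: measure_pmf_of_list[OF wf])
  have mc2: "measure M (UNIV - {2}) = e/(1+e) + (1-e)/(1+e)" unfolding M_def by (simp add: measure_pmf_of_list[OF wf])
  have m12: "measure M {1, 2} = e/(1+e) + e/(1+e)" unfolding M_def by (simp add: measure_pmf_of_list[OF wf])
  have key: "(1 - e) * (e/(1+e) + (1-e)/(1+e)) = (1-e)/(1+e)" using ep by (simp add: field_simps)
  have i31: "{3::real} \<inter> (UNIV - {1}) = {3}" "{3::real} \<inter> (UNIV - {2}) = {3}" "{3::real} \<inter> {1} = {}" "{3::real} \<inter> {2} = {}" by auto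
  have c1: "is_cond_prob M {3} (sigma (space M) {{1}}) (\<lambda>\<omega>. if \<omega> \<in> {1} then 0 else 1 - e)"
    by (rule cp_construct[OF P]) (simp_all only: sp i31 m3 mc1 key m1, simp_all)
  have c2: "is_cond_prob M {3} (sigma (space M) {{2}}) (\<lambda>\<omega>. if \<omega> \<in> {2} then 0 else 1 - e)"
    by (rule cp_construct[OF P]) (simp_all only: sp i31 m3 mc2 key m1, simp_all)
  have i1: "(\<lambda>\<omega>. if \<omega> \<in> {1} then 0 else 1 - e) ` space M \<subseteq> {0, 1 - e}" by auto
  have i2: "(\<lambda>\<omega>. if \<omega> \<in> {2} then 0 else 1 - e) ` space M \<subseteq> {0, 1 - e}" by auto
  show "coherent_mn 2 2 M (\<lambda>\<omega>. if \<omega> \<in> {1} then 0 else 1 - e) (\<lambda>\<omega>. if \<omega> \<in> {2} then 0 else 1 - e)"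
    unfolding coherent_mn_def coherent_def using P c1 c2 card_sub2[OF i2] card_sub2[OF i1]
    by (auto simp: sp intro!: exI[of _ "{3}"])
  have "{\<omega> \<in> space M. 1 - e \<le> \<bar>(if \<omega> \<in> {1} then 0 else 1 - e) - (if \<omega> \<in> {2} then 0 else 1 - e)\<bar>} = {1, 2}"
    using e0 e1 by (auto simp: sp)
  then show "measure M {\<omega> \<in> space M. 1 - e \<le> \<bar>(if \<omega> \<in> {1} then 0 else 1 - e) - (if \<omega> \<in> {2} then 0 else 1 - e)\<bar>} = 2 * e / (1 + e)"
    using m12 by (simp add: field_simps)
qed



lemma cmn_prob: "coherent_mn m n M X Y \<Longrightarrow> prob_space M"
  unfolding coherent_mn_def coherent_def by auto

lemma vals_a_le:
  fixes T :: "'a itself"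
  assumes "v \<in> eps_mn_vals T 1 n \<delta>" "0 \<le> \<delta>"
  shows "v \<le> (if \<delta> < 1/2 then \<delta> else 1)"
proof -
  obtain M :: "'a measure" and X Y where v: "v = measure M {\<omega> \<in> space M. 1 - \<delta> \<le> \<bar>X \<omega> - Y \<omega>\<bar>}" and c: "coherent_mn 1 n M X Y"
    using assms(1) unfolding eps_mn_vals_def by blast
  show ?thesis
  proof (cases "\<delta> < 1/2")
    case True then show ?thesis using bound_a[OF c assms(2)] v by simp
  next
    case False then show ?thesis using prob_space.prob_le_1[OF cmn_prob[OF c]] v by simp
  qed
qed

lemma vals_b_le:
  fixes T :: "'a itself"
  assumes "v \<in> eps_mn_vals T 2 2 \<delta>" "0 \<le> \<delta>"
  shows "v \<le> (if \<delta> < 1/2 then 2 * \<delta> / (1 + \<delta>) else 1)"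
proof -
  obtain M :: "'a measure" and X Y where v: "v = measure M {\<omega> \<in> space M. 1 - \<delta> \<le> \<bar>X \<omega> - Y \<omega>\<bar>}" and c: "coherent_mn 2 2 M X Y"
    using assms(1) unfolding eps_mn_vals_def by blast
  show ?thesis
  proof (cases "\<delta> < 1/2")
    case True then show ?thesis using bound_b[OF c assms(2)] v by simp
  next
    case False then show ?thesis using prob_space.prob_le_1[OF cmn_prob[OF c]] v by simp
  qed
qed

lemma vals_c_le:
  fixes T :: "'a itself"
  assumes "v \<in> eps_vals T \<delta>" "0 \<le> \<delta>"
  shows "v \<le> min (2 * \<delta>) 1"
proof -
  obtain M :: "'a measure" and X Y where v: "v = measure M {\<omega> \<in> space M. 1 - \<delta> \<le> \<bar>X \<omega> - Y \<omega>\<bar>}" and c: "coherent M X Y"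
    using assms(1) unfolding eps_vals_def by blast
  have P: "prob_space M" using c unfolding coherent_def by auto
  have "v \<le> 1" using prob_space.prob_le_1[OF P] v by simp
  moreover have "v \<le> 2 * \<delta>"
  proof (cases "\<delta> < 1/2")
    case True then show ?thesis using bound_c[OF c assms(2)] v by simp
  next
    case False then show ?thesis using \<open>v \<le> 1\<close> by simp
  qed
  ultimately show ?thesis by simp
qed

lemma ne_mn: "1 \<le> m \<Longrightarrow> 1 \<le> n \<Longrightarrow> eps_mn_vals (TYPE('a)) m n \<delta> \<noteq> {}"
proof -
  assume "1 \<le> m" "1 \<le> n"
  obtain M :: "'a measure" and X Y where "coherent_mn 1 1 M X Y" using triv_ex by blast
  then have "coherent_mn m n M X Y" using coherent_mn_mono \<open>1 \<le> m\<close> \<open>1 \<le> n\<close> by blast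
  then show ?thesis unfolding eps_mn_vals_def by blast
qed

lemma ne_c: "eps_vals (TYPE('a)) \<delta> \<noteq> {}"
proof -
  obtain M :: "'a measure" and X Y where "coherent_mn 1 1 M X Y" using triv_ex by blast
  then have "coherent M X Y" unfolding coherent_mn_def by blast
  then show ?thesis unfolding eps_vals_def by blast
qed

theorem proposition1p1:
  fixes \<delta> :: real and n :: nat
  assumes "0 \<le> \<delta>" and "\<delta> \<le> 1" and "2 \<le> n"
  shows
    \<comment> \<open>(a)\<close>
    "eps_mn_on TYPE('a) 1 n \<delta> \<le> (if \<delta> < 1/2 then \<delta> else 1)
     \<and> eps_mn_on TYPE(real) 1 n \<delta> = (if \<delta> < 1/2 then \<delta> else 1)
    \<comment> \<open>(b)\<close>
     \<and> eps_mn_on TYPE('a) 2 2 \<delta> \<le> (if \<delta> < 1/2 then 2 * \<delta> / (1 + \<delta>) else 1)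
     \<and> eps_mn_on TYPE(real) 2 2 \<delta> = (if \<delta> < 1/2 then 2 * \<delta> / (1 + \<delta>) else 1)
    \<comment> \<open>(c)\<close>
     \<and> eps_mn_on TYPE(real) 2 2 \<delta> \<le> eps_on TYPE(real) \<delta>
     \<and> eps_on TYPE('a) \<delta> \<le> min (2 * \<delta>) 1"
proof -
  have n1: "1 \<le> n" using assms(3) by simp
  have A1: "eps_mn_on TYPE('a) 1 n \<delta> \<le> (if \<delta> < 1/2 then \<delta> else 1)"
    unfolding eps_mn_on_def by (rule cSup_least[OF ne_mn[OF order_refl n1]]) (rule vals_a_le[OF _ assms(1)])
  have memA: "(if \<delta> < 1/2 then \<delta> else 1) \<in> eps_mn_vals TYPE(real) 1 n \<delta>"
  proof (cases "\<delta> < 1/2")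
    case True
    let ?M = "measure_pmf (pmf_of_list [(1::real, \<delta>), (0, 1 - \<delta>)])"
    note e = ex1[of \<delta>, OF assms(1) assms(2)]
    have "{\<omega> \<in> space ?M. 1 - \<delta> \<le> \<bar>(if \<omega> \<in> UNIV then \<delta> else \<delta>) - (if \<omega> \<in> {1} then 1 else 0)\<bar>} = {1}"
      using True assms(1) by auto
    then have "measure ?M {\<omega> \<in> space ?M. 1 - \<delta> \<le> \<bar>(if \<omega> \<in> UNIV then \<delta> else \<delta>) - (if \<omega> \<in> {1} then 1 else 0)\<bar>} = \<delta>"
      using e(2) by simp
    moreover have "coherent_mn 1 n ?M (\<lambda>\<omega>. if \<omega> \<in> UNIV then \<delta> else \<delta>) (\<lambda>\<omega>. if \<omega> \<in> {1} then 1 else 0)"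
      using coherent_mn_mono[OF e(1) order_refl assms(3)] .
    ultimately show ?thesis using True unfolding eps_mn_vals_def by (auto intro!: exI)
  next
    case False
    let ?M = "measure_pmf (pmf_of_list [(1::real, 1/2), (0, 1 - 1/2)])"
    note e = ex1[of "1/2"]
    have "{\<omega> \<in> space ?M. 1 - \<delta> \<le> \<bar>(if \<omega> \<in> UNIV then 1/2 else 1/2) - (if \<omega> \<in> {1} then 1 else 0)\<bar>} = UNIV"
      using False by auto
    then have "measure ?M {\<omega> \<in> space ?M. 1 - \<delta> \<le> \<bar>(if \<omega> \<in> UNIV then 1/2 else 1/2) - (if \<omega> \<in> {1} then 1 else 0)\<bar>} = 1"
      using e(3) by simp
    moreover have "coherent_mn 1 n ?M (\<lambda>\<omega>. if \<omega> \<in> UNIV then 1/2 else 1/2) (\<lambda>\<omega>. if \<omega> \<in> {1} then 1 else 0)"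
      using coherent_mn_mono[OF e(1) order_refl assms(3)] by simp
    ultimately show ?thesis using False unfolding eps_mn_vals_def by (auto intro!: exI)
  qed
  have A2: "eps_mn_on TYPE(real) 1 n \<delta> = (if \<delta> < 1/2 then \<delta> else 1)"
    unfolding eps_mn_on_def by (rule cSup_eq_maximum[OF memA]) (rule vals_a_le[OF _ assms(1)])
  have B1: "eps_mn_on TYPE('a) 2 2 \<delta> \<le> (if \<delta> < 1/2 then 2 * \<delta> / (1 + \<delta>) else 1)"
  proof -
    have "eps_mn_vals TYPE('a) 2 2 \<delta> \<noteq> {}" by (rule ne_mn) auto
    then show ?thesis unfolding eps_mn_on_def by (rule cSup_least) (rule vals_b_le[OF _ assms(1)])
  qed
  have memB: "(if \<delta> < 1/2 then 2 * \<delta> / (1 + \<delta>) else 1) \<in> eps_mn_vals TYPE(real) 2 2 \<delta>"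
  proof (cases "\<delta> < 1/2")
    case True
    note e = ex2[OF assms(1) True]
    show ?thesis using True e unfolding eps_mn_vals_def by (auto intro!: exI)
  next
    case False
    let ?M = "measure_pmf (pmf_of_list [(1::real, 1/2), (0, 1 - 1/2)])"
    note e = ex1[of "1/2"]
    have "{\<omega> \<in> space ?M. 1 - \<delta> \<le> \<bar>(if \<omega> \<in> UNIV then 1/2 else 1/2) - (if \<omega> \<in> {1} then 1 else 0)\<bar>} = UNIV"
      using False by auto
    then have "measure ?M {\<omega> \<in> space ?M. 1 - \<delta> \<le> \<bar>(if \<omega> \<in> UNIV then 1/2 else 1/2) - (if \<omega> \<in> {1} then 1 else 0)\<bar>} = 1"
      using e(3) by simp
    moreover have "coherent_mn 2 2 ?M (\<lambda>\<omega>. if \<omega> \<in> UNIV then 1/2 else 1/2) (\<lambda>\<omega>. if \<omega> \<in> {1} then 1 else 0)"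
      using coherent_mn_mono[OF e(1)] by simp
    ultimately show ?thesis using False unfolding eps_mn_vals_def by (auto intro!: exI)
  qed
  have B2: "eps_mn_on TYPE(real) 2 2 \<delta> = (if \<delta> < 1/2 then 2 * \<delta> / (1 + \<delta>) else 1)"
    unfolding eps_mn_on_def by (rule cSup_eq_maximum[OF memB]) (rule vals_b_le[OF _ assms(1)])
  have C1: "eps_mn_on TYPE(real) 2 2 \<delta> \<le> eps_on TYPE(real) \<delta>"
    unfolding eps_mn_on_def eps_on_def
  proof (rule cSup_subset_mono[OF ne_mn])
    show "bdd_above (eps_vals TYPE(real) \<delta>)"
      by (rule bdd_aboveI[of _ 1]) (use vals_c_le[OF _ assms(1)] in force)
    show "eps_mn_vals TYPE(real) 2 2 \<delta> \<subseteq> eps_vals TYPE(real) \<delta>"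
      unfolding eps_mn_vals_def eps_vals_def coherent_mn_def by blast
  qed auto
  have C2: "eps_on TYPE('a) \<delta> \<le> min (2 * \<delta>) 1"
    unfolding eps_on_def by (rule cSup_least[OF ne_c]) (rule vals_c_le[OF _ assms(1)])
  show ?thesis using A1 A2 B1 B2 C1 C2 by blast
qed

end
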